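(* Let $0<\eta<1$, $I=[\eta,1]$, and $\mathcal{D}$ as in the context. For every $s\in(0,1)$ and every $k\ge0$, the function $x\mapsto (x^s+k)^{-1}$ on $I$ belongs to $\mathscr{L}_1(\mathcal{D})$.
   Context: Dictionary: for $b\in(0,\infty)$ let $g(x,b)=\frac{\eta+b}{x+b}$ on $I$, and $\mathcal{D}=\{g(\cdot,b):b\in(0,\infty)\}\subset L^\infty(I)$. $B_1(\mathcal{D})$ is the closure in $L^\infty(I)$ of $\{\sum_{j=1}^m c_jg_j: m\in\mathbb{N}, g_j\in\mathcal{D}, \sum_j|c_j|\le1\}$; $\|f\|_{\mathscr{L}_1(\mathcal{D})}=\inf\{c>0: f\in cB_1(\mathcal{D})\}$; $\mathscr{L}_1(\mathcal{D})=\{f:\|f\|_{\mathscr{L}_1(\mathcal{D})}<\infty\}$. *)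

theory Defs
  imports "HOL-Analysis.Analysis"
begin

definition Ival :: "real \<Rightarrow> real set" where
  "Ival \<eta> = {\<eta>..1}"

definition gdict :: "real \<Rightarrow> real \<Rightarrow> real \<Rightarrow> real" where
  "gdict \<eta> b x = (\<eta> + b) / (x + b)"

text \<open>B_1(D): closure, in the uniform (L-infinity) norm on I, of the finite
  combinations sum c_j g(.,b_j) with b_j > 0 and sum |c_j| <= 1.\<close>
definition B1 :: "real \<Rightarrow> (real \<Rightarrow> real) set" where
  "B1 \<eta> = {f. \<forall>\<epsilon>>0. \<exists>m::nat. \<exists>c b :: nat \<Rightarrow> real.
      (\<forall>j<m. b j > 0) \<and> (\<Sum>j<m. \<bar>c j\<bar>) \<le> 1 \<and>
      (\<forall>x\<in>Ival \<eta>. \<bar>f x - (\<Sum>j<m. c j * gdict \<eta> (b j) x)\<bar> \<le> \<epsilon>)}"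

definition in_scaled_B1 :: "real \<Rightarrow> real \<Rightarrow> (real \<Rightarrow> real) \<Rightarrow> bool" where
  "in_scaled_B1 \<eta> c f \<longleftrightarrow> (\<exists>h\<in>B1 \<eta>. \<forall>x\<in>Ival \<eta>. f x = c * h x)"

definition L1norm :: "real \<Rightarrow> (real \<Rightarrow> real) \<Rightarrow> ereal" where
  "L1norm \<eta> f = Inf {ereal c | c. c > 0 \<and> in_scaled_B1 \<eta> c f}"

definition L1space :: "real \<Rightarrow> (real \<Rightarrow> real) set" where
  "L1space \<eta> = {f. L1norm \<eta> f < \<infinity>}"

end

theory Submission
  imports Defs "HOL-Complex_Analysis.Complex_Analysis"
begin

definition Lb :: "real \<Rightarrow> complex \<Rightarrow> complex" where
  "Lb c z = Ln (- (of_real c * \<i>) * z) + of_real c * \<i> * of_real (pi/2)"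
definition pb :: "real \<Rightarrow> real \<Rightarrow> complex \<Rightarrow> complex" where
  "pb s c z = (if z = 0 then 0 else exp (of_real s * Lb c z))"
definition hb :: "real \<Rightarrow> real \<Rightarrow> real \<Rightarrow> complex \<Rightarrow> complex" where
  "hb s k c z = 1 / (pb s c z + of_real k)"
definition hp :: "real \<Rightarrow> real \<Rightarrow> complex \<Rightarrow> complex" where
  "hp s k z = 1 / (exp (of_real s * Ln z) + of_real k)"

lemma Re_rot: "Re (- (of_real c * \<i>) * z) = c * Im z"
  by simp
lemma Im_rot: "Im (- (of_real c * \<i>) * z) = - c * Re z"
  by simp

lemma Lb_props:
  assumes c: "c = 1 \<or> c = -1" and z: "z \<noteq> 0" and h: "c * Im z \<ge> 0"
  shows "Re (Lb c z) = ln (norm z)" "\<bar>Im (Lb c z)\<bar> \<le> pi"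
proof -
  let ?w = "- (of_real c * \<i>) * z"
  have w0: "?w \<noteq> 0" using z c by auto
  have nw: "norm ?w = norm z" using c by (auto simp: norm_mult)
  show "Re (Lb c z) = ln (norm z)" using w0 nw by (simp add: Lb_def)
  have "\<bar>Im (Ln ?w)\<bar> \<le> pi/2" using Re_Ln_pos_le[OF w0] h by simp
  then show "\<bar>Im (Lb c z)\<bar> \<le> pi" using c by (auto simp: Lb_def)
qed

lemma Lb_eq_Ln:
  assumes c: "c = 1 \<or> c = -1" and z: "0 < Re z"
  shows "Lb c z = Ln z"
proof -
  let ?w = "- (of_real c * \<i>) * z"
  have z0: "z \<noteq> 0" using z by auto
  have w0: "?w \<noteq> 0" using z0 c by auto
  have e: "exp (of_real c * \<i> * of_real (pi/2)) = of_real c * \<i>"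
    using c by (auto simp: exp_eq_polar cis.ctr complex_eq_iff)
  have ex: "exp (Lb c z) = z" unfolding Lb_def exp_add e exp_Ln[OF w0]
    using c by (auto simp: algebra_simps)
  have "- pi < Im (Lb c z) \<and> Im (Lb c z) \<le> pi"
  proof (cases "c = 1")
    case True
    then have "Im ?w < 0" using z by simp
    then have "- pi < Im (Ln ?w) \<and> Im (Ln ?w) < 0"
      using Im_Ln_pos_le[OF w0] mpi_less_Im_Ln[OF w0] Im_Ln_le_pi[OF w0] by auto
    then show ?thesis using True by (simp add: Lb_def)
  next
    case False
    then have c': "c = -1" using c by auto
    then have "Im ?w > 0" using z by simp
    then have "0 < Im (Ln ?w) \<and> Im (Ln ?w) < pi"
      using Im_Ln_pos_lt_imp by blast
    then show ?thesis using c' by (simp add: Lb_def)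
  qed
  then show ?thesis using Ln_unique[OF ex] by auto
qed

lemma exp_plus_k_lower:
  fixes w :: complex
  assumes s: "0 < s" "s < 1" and k: "0 \<le> k" and w: "\<bar>Im w\<bar> \<le> s * pi"
  shows "sin (s * pi) * exp (Re w) \<le> norm (exp w + of_real k)"
proof -
  let ?a = "exp (Re w)" and ?p = "Im w"
  have a: "?a > 0" by simp
  have spi: "s * pi < pi" "0 < s * pi" using s by auto
  have spi2: "0 < pi - s * pi" using spi by linarith
  have sp: "0 < sin (s*pi)" "sin (s*pi) \<le> 1" using s by (auto intro!: sin_gt_zero)
  have re: "Re (exp w + of_real k) = ?a * cos ?p + k" and im: "Im (exp w + of_real k) = ?a * sin ?p"
    by (simp_all add: Re_exp Im_exp)
  show ?thesis
  proof (cases "cos ?p \<ge> 0")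
    case True
    have "?a^2 = (?a * cos ?p)^2 + (?a * sin ?p)^2"
      by (simp add: power_mult_distrib flip: distrib_left)
    also have "\<dots> \<le> (?a * cos ?p + k)^2 + (?a * sin ?p)^2"
      using True k a by (intro add_right_mono power_mono) auto
    also have "\<dots> = (norm (exp w + of_real k))^2"
      by (simp only: cmod_power2 re im)
    finally have "?a \<le> norm (exp w + of_real k)"
      by (meson norm_ge_zero power2_le_imp_le)
    moreover have "sin (s*pi) * ?a \<le> 1 * ?a" using sp a by (intro mult_right_mono) auto
    ultimately show ?thesis by linarith
  next
    case False
    have ap: "pi/2 < \<bar>?p\<bar>"
    proof (rule ccontr)
      assume "\<not> pi/2 < \<bar>?p\<bar>"
      then have "cos ?p \<ge> 0" by (intro cos_ge_zero) auto
      then show False using False by simp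
    qed
    have "sin (s*pi) \<le> sin \<bar>?p\<bar>"
    proof -
      have "sin (s*pi) = sin (pi - s*pi)" by simp
      also have "\<dots> \<le> sin (pi - \<bar>?p\<bar>)"
        by (intro sin_monotone_2pi_le; use w ap spi2 pi_gt_zero in linarith)
      also have "\<dots> = sin \<bar>?p\<bar>" by simp
      finally show ?thesis .
    qed
    also have "sin \<bar>?p\<bar> = \<bar>sin ?p\<bar>"
    proof -
      have "0 \<le> \<bar>?p\<bar>" "\<bar>?p\<bar> \<le> pi" using w spi2 by linarith+
      then have "0 \<le> sin \<bar>?p\<bar>" by (intro sin_ge_zero) auto
      then show ?thesis by (cases "?p \<ge> 0") auto
    qed
    finally have "sin (s*pi) * ?a \<le> \<bar>?a * sin ?p\<bar>" using a by (simp add: abs_mult)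
    also have "\<dots> \<le> norm (exp w + of_real k)" using abs_Im_le_cmod[of "exp w + of_real k"] im by simp
    finally show ?thesis .
  qed
qed


lemma pb_norm:
  assumes c: "c = 1 \<or> c = -1"
  shows "norm (pb s c z) = norm z powr s"
proof (cases "z = 0")
  case True then show ?thesis by (simp add: pb_def)
next
  case False
  let ?w = "- (of_real c * \<i>) * z"
  have w0: "?w \<noteq> 0" using False c by auto
  have nw: "norm ?w = norm z" using c by (auto simp: norm_mult)
  have "Re (Lb c z) = ln (norm z)" using w0 nw by (simp add: Lb_def)
  then show ?thesis using False by (simp add: pb_def norm_exp_eq_Re powr_def)
qed

lemma pb_lower:
  assumes c: "c = 1 \<or> c = -1" and h: "c * Im z \<ge> 0" and s: "0 < s" "s < 1" and k: "0 \<le> k"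
  shows "sin (s*pi) * norm z powr s \<le> norm (pb s c z + of_real k)"
proof (cases "z = 0")
  case True then show ?thesis using k by (simp add: pb_def)
next
  case False
  have im: "\<bar>Im (of_real s * Lb c z)\<bar> \<le> s * pi"
    using Lb_props(2)[OF c False h] s by (simp add: abs_mult)
  have "exp (Re (of_real s * Lb c z)) = norm z powr s"
    using Lb_props(1)[OF c False h] False by (simp add: powr_def)
  then show ?thesis using exp_plus_k_lower[OF s k im] False by (simp add: pb_def)
qed

lemma sin_spi_pos: "0 < s \<Longrightarrow> s < 1 \<Longrightarrow> 0 < sin (s*pi)"
  by (intro sin_gt_zero) auto

lemma pb_plus_k_nz:
  assumes c: "c = 1 \<or> c = -1" and h: "c * Im z \<ge> 0" and s: "0 < s" "s < 1" and k: "0 < k"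
  shows "pb s c z + of_real k \<noteq> 0"
proof (cases "z = 0")
  case True then show ?thesis using k by (simp add: pb_def)
next
  case False
  have "0 < sin (s*pi) * norm z powr s" using sin_spi_pos[OF s] False by simp
  then show ?thesis using pb_lower[OF c h s less_imp_le[OF k]] k by force
qed

lemma hb_bound:
  assumes c: "c = 1 \<or> c = -1" and h: "c * Im z \<ge> 0" and s: "0 < s" "s < 1" and k: "0 \<le> k"
    and z: "z \<noteq> 0"
  shows "norm (hb s k c z) \<le> 1 / (sin (s*pi) * norm z powr s)"
proof -
  have p: "0 < sin (s*pi) * norm z powr s" using sin_spi_pos[OF s] z by simp
  then show ?thesis using pb_lower[OF c h s k]
    by (simp add: hb_def norm_divide frac_le)
qed

lemma hb_eq_hp:
  assumes c: "c = 1 \<or> c = -1" and z: "0 < Re z"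
  shows "hb s k c z = hp s k z"
proof -
  have "z \<noteq> 0" using z by auto
  then show ?thesis using Lb_eq_Ln[OF c z] by (simp add: hb_def hp_def pb_def)
qed

lemma hp_real:
  assumes "0 < x"
  shows "hp s k (of_real x) = of_real (1 / (x powr s + k))"
  using assms by (simp add: hp_def Ln_of_real powr_def flip: exp_of_real)

lemma pb_cont:
  assumes c: "c = 1 \<or> c = -1" and s: "0 < s"
  shows "continuous_on {z. c * Im z \<ge> 0} (pb s c)"
proof (rule continuous_on_eq_continuous_within[THEN iffD2], intro ballI)
  fix z assume zH: "z \<in> {z. c * Im z \<ge> 0}"
  show "continuous (at z within {z. c * Im z \<ge> 0}) (pb s c)"
  proof (cases "z = 0")
    case False
    have nr: "- (of_real c * \<i>) * z \<notin> \<real>\<^sub>\<le>\<^sub>0"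
      using False zH c by (auto simp: complex_nonpos_Reals_iff complex_eq_iff)
    have "isCont (\<lambda>w. exp (of_real s * Lb c w)) z"
      unfolding Lb_def using nr by (intro continuous_intros) auto
    moreover have ev: "eventually (\<lambda>w. exp (of_real s * Lb c w) = pb s c w) (nhds z)"
    proof -
      have "eventually (\<lambda>w. w \<in> - {0}) (nhds z)"
        using False by (intro eventually_nhds_in_open) auto
      then show ?thesis by eventually_elim (auto simp: pb_def)
    qed
    ultimately have "isCont (pb s c) z" using isCont_cong[OF ev] by simp
    then show ?thesis by (rule continuous_at_imp_continuous_within)
  next
    case True
    have "((\<lambda>w. norm w powr s) \<longlongrightarrow> 0) (at 0 within {z. c * Im z \<ge> 0})"
      by (rule tendsto_zero_powrI[where b=s]) (auto intro!: tendsto_eq_intros s)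
    then have "((\<lambda>w. norm (pb s c w)) \<longlongrightarrow> 0) (at 0 within {z. c * Im z \<ge> 0})"
      using pb_norm[OF c] by simp
    then have "(pb s c \<longlongrightarrow> 0) (at 0 within {z. c * Im z \<ge> 0})"
      by (rule tendsto_norm_zero_cancel)
    then show ?thesis using True by (simp add: continuous_within pb_def)
  qed
qed


lemma H_inner: "{z::complex. c * Im z \<ge> 0} = {z. (of_real c * \<i>) \<bullet> z \<ge> 0}"
  "{z::complex. c * Im z > 0} = {z. (of_real c * \<i>) \<bullet> z > 0}"
  by (auto simp: inner_complex_def)

lemma hp_holo:
  assumes s: "0 < s" "s < 1" and k: "0 < k"
  shows "hp s k holomorphic_on {z. 0 < Re z}"
proof -
  have nz: "exp (of_real s * Ln z) + of_real k \<noteq> 0" if z: "0 < Re z" for z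
  proof -
    have "\<exists>c. (c = 1 \<or> c = (-1::real)) \<and> c * Im z \<ge> 0"
    proof (cases "Im z \<ge> 0")
      case True then show ?thesis by (intro exI[of _ 1]) simp
    next
      case False then show ?thesis by (intro exI[of _ "-1"]) simp
    qed
    then obtain c where c: "c = 1 \<or> c = (-1::real)" and h: "c * Im z \<ge> 0" by blast
    have "z \<noteq> 0" using z by auto
    then have "pb s c z = exp (of_real s * Ln z)" using Lb_eq_Ln[OF c z] by (simp add: pb_def)
    then show ?thesis using pb_plus_k_nz[OF c h s k] by simp
  qed
  have "Ln holomorphic_on {z. 0 < Re z}"
    by (rule holomorphic_on_Ln) (auto simp: complex_nonpos_Reals_iff)
  then show ?thesis unfolding hp_def using nz
    by (intro holomorphic_intros) (auto simp: complex_nonpos_Reals_iff)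
qed

lemma hb_holo:
  assumes c: "c = 1 \<or> c = -1" and s: "0 < s" "s < 1" and k: "0 < k"
  shows "hb s k c holomorphic_on {z. c * Im z > 0}"
proof -
  have "Lb c holomorphic_on {z. c * Im z > 0}"
    unfolding Lb_def by (intro holomorphic_intros) (auto simp: complex_nonpos_Reals_iff)
  then have h1: "(\<lambda>z. 1 / (exp (of_real s * Lb c z) + of_real k)) holomorphic_on {z. c * Im z > 0}"
  proof (intro holomorphic_intros)
    fix z assume z: "z \<in> {z. c * Im z > 0}"
    then have "z \<noteq> 0" by auto
    then show "exp (of_real s * Lb c z) + of_real k \<noteq> 0"
      using pb_plus_k_nz[OF c _ s k, of z] z by (simp add: pb_def)
  qed
  show ?thesis
    by (rule holomorphic_transform[OF h1]) (auto simp: hb_def pb_def)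
qed

lemma hb_cont:
  assumes c: "c = 1 \<or> c = -1" and s: "0 < s" "s < 1" and k: "0 < k"
  shows "continuous_on {z. c * Im z \<ge> 0} (hb s k c)"
  unfolding hb_def using pb_cont[OF c s(1)] pb_plus_k_nz[OF c _ s k]
  by (intro continuous_intros) auto


lemma arc_image:
  assumes c: "c = 1 \<or> c = -1" and R: "0 \<le> R"
  shows "path_image (part_circlepath 0 R ((1-c)*pi) pi) \<subseteq> {z. c * Im z \<ge> 0}"
proof
  fix z assume "z \<in> path_image (part_circlepath 0 R ((1-c)*pi) pi)"
  then obtain x where x: "x \<in> closed_segment ((1-c)*pi) pi" and z: "z = 0 + R * cis x"
    unfolding path_image_part_circlepath' by auto
  have "Im z = R * sin x" using z by simp
  moreover have "c * sin x \<ge> 0"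
  proof (cases "c = 1")
    case True
    then have "0 \<le> x" "x \<le> pi" using x by (auto simp: closed_segment_eq_real_ivl)
    then show ?thesis using True sin_ge_zero by auto
  next
    case False
    then have c': "c = -1" using c by auto
    then have "pi \<le> x" "x \<le> 2*pi" using x by (auto simp: closed_segment_eq_real_ivl)
    then have "0 \<le> sin (x - pi)" by (intro sin_ge_zero) auto
    then show ?thesis using c' by simp
  qed
  ultimately show "z \<in> {z. c * Im z \<ge> 0}" using R by (simp add: mult.left_commute)
qed

lemma line_image:
  "path_image (linepath (of_real a) (of_real b)) \<subseteq> {z. Im z = 0}"
  by (auto simp: in_segment)

lemma cauchy_half:
  assumes c: "c = 1 \<or> c = -1" and s: "0 < s" "s < 1" and k: "0 < k" and x0: "0 < x0" "x0 < R"
  defines "F \<equiv> \<lambda>z. if z = of_real x0 then deriv (hp s k) (of_real x0)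
                   else (hb s k c z - hp s k (of_real x0)) / (z - of_real x0)"
  shows "continuous_on {z. c * Im z \<ge> 0} F \<and> (F has_contour_integral 0) (linepath (of_real (-R)) (of_real R) +++ part_circlepath 0 R ((1-c)*pi) pi)"
proof -
  define H where "H = {z. c * Im z \<ge> 0}"
  define A where "A = {z::complex. 0 < Re z}"
  define P where "P = (\<lambda>z. if z = of_real x0 then deriv (hp s k) (of_real x0)
                   else (hp s k z - hp s k (of_real x0)) / (z - of_real x0))"
  have oA: "open A" unfolding A_def by (rule open_halfspace_Re_gt)
  have Pholo: "P holomorphic_on A" unfolding P_def A_def
    by (rule pole_lemma_open[OF hp_holo[OF s k] oA[unfolded A_def]])
  have contS: "continuous_on (H \<inter> A) F"
  proof (rule continuous_on_eq)
    show "continuous_on (H \<inter> A) P"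
      using holomorphic_on_imp_continuous_on[OF Pholo] by (rule continuous_on_subset) auto
    show "\<And>z. z \<in> H \<inter> A \<Longrightarrow> P z = F z"
      using hb_eq_hp[OF c] by (auto simp: P_def F_def A_def H_def)
  qed
  have contT: "continuous_on (H - {of_real x0}) F"
  proof (rule continuous_on_eq)
    show "continuous_on (H - {of_real x0}) (\<lambda>z. (hb s k c z - hp s k (of_real x0)) / (z - of_real x0))"
      using hb_cont[OF c s k] unfolding H_def
      by (intro continuous_intros) (auto elim: continuous_on_subset)
  qed (auto simp: F_def)
  have eqH: "(H \<inter> A) \<union> (H - {of_real x0}) = H" using x0 by (auto simp: A_def)
  have o1: "openin (top_of_set H) (H \<inter> A)" using oA by auto
  have o2: "openin (top_of_set H) (H - {of_real x0})" by (rule openin_delete) auto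
  have contF: "continuous_on H F"
    using continuous_on_Un_local_open[of "H \<inter> A" "H - {of_real x0}" F] o1 o2 contS contT
    unfolding eqH by blast
  have cI: "of_real c * \<i> \<noteq> 0" using c by auto
  have intH: "interior H = {z. c * Im z > 0}"
    unfolding H_def H_inner using interior_halfspace_ge[OF cI] by simp
  have openI: "open {z. c * Im z > 0}" unfolding H_inner by (rule open_halfspace_gt)
  have Fholo: "F holomorphic_on {z. c * Im z > 0}"
  proof (rule holomorphic_transform)
    show "(\<lambda>z. (hb s k c z - hp s k (of_real x0)) / (z - of_real x0)) holomorphic_on {z. c * Im z > 0}"
      using hb_holo[OF c s k] by (intro holomorphic_intros) auto
  qed (auto simp: F_def)
  have convH: "convex H" unfolding H_def H_inner by (rule convex_halfspace_ge)
  have st: "pathfinish (linepath (of_real (-R)) (of_real R)) = pathstart (part_circlepath 0 R ((1-c)*pi) pi)"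
  proof -
    have e2: "exp (\<i> * (2 * complex_of_real pi)) = 1"
      using exp_two_pi_i by (simp add: mult_ac)
    show ?thesis using c e2 by (auto simp flip: cis_conv_exp)
  qed
  have "(F has_contour_integral 0) (linepath (of_real (-R)) (of_real R) +++ part_circlepath 0 R ((1-c)*pi) pi)"
  proof (rule Cauchy_theorem_convex[OF contF convH finite.emptyI])
    show "\<And>x. x \<in> interior H - {} \<Longrightarrow> F field_differentiable at x"
      using holomorphic_on_imp_differentiable_at[OF Fholo openI] intH by auto
    show "valid_path (linepath (of_real (-R)) (of_real R) +++ part_circlepath 0 R ((1-c)*pi) pi)"
      using st by simp
    show "path_image (linepath (of_real (-R)) (of_real R) +++ part_circlepath 0 R ((1-c)*pi) pi) \<subseteq> H"
      using path_image_join[OF st] line_image[of "-R" R] arc_image[OF c, of R] x0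
      unfolding H_def by auto
    show "pathfinish (linepath (of_real (-R)) (of_real R) +++ part_circlepath 0 R ((1-c)*pi) pi) =
      pathstart (linepath (of_real (-R)) (of_real R) +++ part_circlepath 0 R ((1-c)*pi) pi)"
      by (simp flip: cis_conv_exp)
  qed
  then show ?thesis using contF unfolding H_def by blast
qed

lemma real_seg:
  assumes "z \<in> closed_segment (of_real a) (of_real b :: complex)" "a \<le> b"
  shows "\<exists>t. z = of_real t \<and> a \<le> t \<and> t \<le> b"
proof -
  obtain u where u: "0 \<le> u" "u \<le> 1" "z = (1 - u) *\<^sub>R of_real a + u *\<^sub>R of_real b"
    using assms(1) by (auto simp: in_segment)
  have "z = of_real ((1-u)*a + u*b)" using u(3) by (simp add: scaleR_conv_of_real)
  moreover have "a \<le> (1-u)*a + u*b" "(1-u)*a + u*b \<le> b"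
    using u assms(2) mult_left_mono[of a b u] mult_left_mono[of a b "1-u"] by (auto simp: algebra_simps)
  ultimately show ?thesis by blast
qed

lemma pcp_split:
  assumes f: "continuous_on (sphere 0 R) f" and R: "0 < R"
  shows "contour_integral (part_circlepath 0 R 0 pi) f + contour_integral (part_circlepath 0 R pi (2*pi)) f
         = contour_integral (circlepath 0 R) f"
proof -
  let ?g = "\<lambda>t. f (0 + of_real R * cis t) * of_real R * \<i> * cis t"
  have cg: "continuous_on UNIV ?g"
  proof -
    have "continuous_on UNIV (\<lambda>t. f (0 + of_real R * cis t))"
      by (rule continuous_on_compose2[OF f]) (auto intro!: continuous_intros simp: norm_mult abs_of_pos[OF R])
    then show ?thesis by (intro continuous_intros)
  qed
  have int: "?g integrable_on {0..2*pi}"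
    by (rule integrable_continuous_interval) (rule continuous_on_subset[OF cg], auto)
  have "contour_integral (part_circlepath 0 R 0 pi) f = integral {0..pi} ?g"
    by (rule contour_integral_part_circlepath_eq) simp
  moreover have "contour_integral (part_circlepath 0 R pi (2*pi)) f = integral {pi..2*pi} ?g"
    by (rule contour_integral_part_circlepath_eq) simp
  moreover have "contour_integral (circlepath 0 R) f = integral {0..2*pi} ?g"
    unfolding circlepath_def by (rule contour_integral_part_circlepath_eq) simp
  ultimately show ?thesis using Henstock_Kurzweil_Integration.integral_combine[OF _ _ int, of pi] by simp
qed

lemma rep_identity:
  assumes s: "0 < s" "s < 1" and k: "0 < k" and x0: "0 < x0" "x0 < R"
  defines "D \<equiv> \<lambda>z::complex. (hb s k 1 z - hb s k (-1) z) / (z - of_real x0)"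
  and "A \<equiv> \<lambda>c. contour_integral (part_circlepath 0 R ((1-c)*pi) pi) (\<lambda>z. hb s k c z / (z - of_real x0))"
  shows "hp s k (of_real x0) * (2 * of_real pi * \<i>) = contour_integral (linepath (of_real (-R)) 0) D + A 1 - A (-1)"
proof -
  define F where "F = (\<lambda>c z. if z = of_real x0 then deriv (hp s k) (of_real x0)
                   else (hb s k c z - hp s k (of_real x0)) / (z - of_real x0))"
  define lin where "lin = linepath (of_real (-R)) (of_real R :: complex)"
  define arc where "arc = (\<lambda>c. part_circlepath 0 R ((1-c)*pi) pi)"
  define B where "B = (\<lambda>c. contour_integral (arc c) (\<lambda>z. 1 / (z - of_real x0)))"
  have R: "0 < R" using x0 by linarith
  have main: "contour_integral lin (F c) + contour_integral (arc c) (F c) = 0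
      \<and> continuous_on {z. c * Im z \<ge> 0} (F c)" if c: "c = 1 \<or> c = -1" for c
  proof -
    have ch: "continuous_on {z. c * Im z \<ge> 0} (F c)"
      and hc: "(F c has_contour_integral 0) (lin +++ arc c)"
      using cauchy_half[OF c s k x0] unfolding F_def lin_def arc_def by auto
    have i1: "F c contour_integrable_on lin" unfolding lin_def
      by (rule contour_integrable_continuous_linepath, rule continuous_on_subset[OF ch])
         (use line_image[of "-R" R] in auto)
    have i2: "F c contour_integrable_on arc c" unfolding arc_def
      by (rule contour_integrable_continuous_part_circlepath, rule continuous_on_subset[OF ch])
         (use arc_image[OF c, of R] R in auto)
    have "contour_integral (lin +++ arc c) (F c) = 0" using hc by (rule contour_integral_unique)
    then show ?thesis using i1 i2 ch by (simp add: lin_def arc_def)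
  qed
  have c1: "continuous_on {z. 1 * Im z \<ge> 0} (F 1)" and c2: "continuous_on {z. (-1) * Im z \<ge> 0} (F (-1))"
    using main[of 1] main[of "-1"] by auto
  have cdiff: "continuous_on (closed_segment (of_real (-R)) (of_real R)) (\<lambda>z. F 1 z - F (-1) z)"
  proof -
    have sub: "closed_segment (of_real (-R)) (of_real R :: complex) \<subseteq> {z. Im z = 0}"
      using line_image[of "-R" R] by simp
    show ?thesis
      by (intro continuous_intros; rule continuous_on_subset[OF c1] continuous_on_subset[OF c2])
         (use sub in auto)
  qed
  have 0: "0 \<in> closed_segment (of_real (-R)) (of_real R :: complex)"
    using R by (auto simp: in_segment intro!: exI[of _ "1/2"] simp: scaleR_conv_of_real)
  have linsplit: "contour_integral lin (\<lambda>z. F 1 z - F (-1) z) = contour_integral (linepath (of_real (-R)) 0) D"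
  proof -
    have "contour_integral lin (\<lambda>z. F 1 z - F (-1) z) =
       contour_integral (linepath (of_real (-R)) 0) (\<lambda>z. F 1 z - F (-1) z) +
       contour_integral (linepath 0 (of_real R)) (\<lambda>z. F 1 z - F (-1) z)"
      unfolding lin_def by (rule contour_integral_split_linepath[OF cdiff 0])
    moreover have "contour_integral (linepath 0 (of_real R)) (\<lambda>z. F 1 z - F (-1) z) = 0"
    proof -
      have "contour_integral (linepath 0 (of_real R)) (\<lambda>z. F 1 z - F (-1) z) =
            contour_integral (linepath 0 (of_real R)) (\<lambda>z. 0)"
      proof (rule contour_integral_eq)
        fix z :: complex assume "z \<in> path_image (linepath 0 (of_real R))"
        then obtain t where t: "z = of_real t" "0 \<le> t" "t \<le> R"
          using real_seg[of z 0 R] R by auto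
        show "F 1 z - F (-1) z = 0"
        proof (cases "t = 0")
          case True then show ?thesis using t by (simp add: F_def hb_def pb_def)
        next
          case False
          then have "0 < Re z" using t by simp
          then show ?thesis using hb_eq_hp[of 1 z s k] hb_eq_hp[of "-1" z s k] by (simp add: F_def)
        qed
      qed
      then show ?thesis by simp
    qed
    moreover have "contour_integral (linepath (of_real (-R)) 0) (\<lambda>z. F 1 z - F (-1) z) =
                   contour_integral (linepath (of_real (-R)) 0) D"
    proof (rule contour_integral_eq)
      fix z :: complex assume "z \<in> path_image (linepath (of_real (-R)) 0)"
      then obtain t where t: "z = of_real t" "-R \<le> t" "t \<le> 0"
        using real_seg[of z "-R" 0] R by auto
      then have "z \<noteq> of_real x0" using x0 by auto
      then show "F 1 z - F (-1) z = D z" by (simp add: F_def D_def diff_divide_distrib)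
    qed
    ultimately show ?thesis by simp
  qed
  have arcpart: "contour_integral (arc c) (F c) = A c - hp s k (of_real x0) * B c"
    if c: "c = 1 \<or> c = -1" for c
  proof -
    have ch: "continuous_on {z. c * Im z \<ge> 0} (hb s k c)" by (rule hb_cont[OF c s k])
    have sub: "path_image (arc c) \<subseteq> {z. c * Im z \<ge> 0} \<inter> {z. z \<noteq> of_real x0}"
    proof -
      have "path_image (arc c) \<subseteq> sphere 0 R" unfolding arc_def
        by (rule path_image_part_circlepath_subset') (use R in auto)
      then have "path_image (arc c) \<subseteq> {z. z \<noteq> of_real x0}" using x0 by auto
      then show ?thesis using arc_image[OF c, of R] R unfolding arc_def by auto
    qed
    have i1: "(\<lambda>z. hb s k c z / (z - of_real x0)) contour_integrable_on arc c" unfolding arc_def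
      by (rule contour_integrable_continuous_part_circlepath, 
          use sub in \<open>auto intro!: continuous_intros intro: continuous_on_subset[OF ch] simp: arc_def\<close>)
    have i2: "(\<lambda>z. 1 / (z - of_real x0)) contour_integrable_on arc c" unfolding arc_def
      by (rule contour_integrable_continuous_part_circlepath,
          use sub in \<open>auto intro!: continuous_intros simp: arc_def\<close>)
    have "contour_integral (arc c) (F c) = contour_integral (arc c)
            (\<lambda>z. hb s k c z / (z - of_real x0) - hp s k (of_real x0) * (1 / (z - of_real x0)))"
      by (rule contour_integral_eq) (use sub in \<open>auto simp: F_def diff_divide_distrib\<close>)
    also have "\<dots> = contour_integral (arc c) (\<lambda>z. hb s k c z / (z - of_real x0))
        - contour_integral (arc c) (\<lambda>z. hp s k (of_real x0) * (1 / (z - of_real x0)))"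
      by (rule contour_integral_diff[OF i1 contour_integrable_lmul[OF i2]])
    also have "contour_integral (arc c) (\<lambda>z. hp s k (of_real x0) * (1 / (z - of_real x0)))
        = hp s k (of_real x0) * B c"
      unfolding B_def by (rule contour_integral_lmul[OF i2])
    also have "contour_integral (arc c) (\<lambda>z. hb s k c z / (z - of_real x0)) = A c"
      by (simp add: A_def arc_def)
    finally show ?thesis .
  qed
  have Bdiff: "B 1 - B (-1) = 2 * of_real pi * \<i>"
  proof -
    have "B (-1) = - contour_integral (part_circlepath 0 R pi (2*pi)) (\<lambda>z. 1 / (z - of_real x0))"
      unfolding B_def arc_def by (simp add: contour_integral_part_circlepath_reverse[of 0 R "2*pi"])
    moreover have "B 1 = contour_integral (part_circlepath 0 R 0 pi) (\<lambda>z. 1 / (z - of_real x0))"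
      unfolding B_def arc_def by simp
    moreover have "continuous_on (sphere 0 R) (\<lambda>z::complex. 1 / (z - of_real x0))"
      using x0 by (intro continuous_intros) auto
    moreover have "contour_integral (circlepath 0 R) (\<lambda>z. 1 / (z - of_real x0)) = 2 * of_real pi * \<i>"
    proof -
      have "((\<lambda>u. (\<lambda>_. 1::complex) u / (u - of_real x0)) has_contour_integral (2 * of_real pi * \<i> * 1)) (circlepath 0 R)"
        by (rule Cauchy_integral_circlepath_simple) (use x0 in \<open>auto intro: holomorphic_intros\<close>)
      then show ?thesis by (simp add: contour_integral_unique)
    qed
    ultimately show ?thesis using pcp_split[of R "\<lambda>z. 1 / (z - of_real x0)"] R by simp
  qed
  have "0 = (contour_integral lin (F 1) + contour_integral (arc 1) (F 1))
          - (contour_integral lin (F (-1)) + contour_integral (arc (-1)) (F (-1)))"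
    using main[of 1] main[of "-1"] by simp
  also have "\<dots> = (contour_integral lin (F 1) - contour_integral lin (F (-1)))
        + contour_integral (arc 1) (F 1) - contour_integral (arc (-1)) (F (-1))" by simp
  also have "contour_integral lin (F 1) - contour_integral lin (F (-1)) = contour_integral lin (\<lambda>z. F 1 z - F (-1) z)"
  proof -
    have "F c contour_integrable_on lin" if c: "c = 1 \<or> c = -1" for c
      unfolding lin_def
      by (rule contour_integrable_continuous_linepath, rule continuous_on_subset[of "{z. c * Im z \<ge> 0}"])
         (use main[OF c] line_image[of "-R" R] in auto)
    then show ?thesis by (simp add: contour_integral_diff)
  qed
  finally have "0 = contour_integral (linepath (of_real (-R)) 0) D + (A 1 - hp s k (of_real x0) * B 1)
       - (A (-1) - hp s k (of_real x0) * B (-1))"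
    using linsplit arcpart[of 1] arcpart[of "-1"] by simp
  also have "\<dots> = contour_integral (linepath (of_real (-R)) 0) D + A 1 - A (-1) - hp s k (of_real x0) * (B 1 - B (-1))"
    by (simp add: algebra_simps)
  finally show ?thesis using Bdiff by (simp add: algebra_simps)
qed

lemma conc1:
  fixes a b s :: real
  assumes s: "0 < s" "s < 1" and a: "0 \<le> a" "a \<le> b" "0 < b"
  shows "(b - a) * b powr (-s) \<le> (b powr (1-s) - a powr (1-s)) / (1-s)"
proof -
  show ?thesis
  proof (cases "a = 0")
    case True
    have "b powr (1 + (-s)) = b powr 1 * b powr (-s)" by (rule powr_add)
    then have "b powr (1-s) = b * b powr (-s)" using a by simp
    moreover have "b * b powr (-s) \<le> b * b powr (-s) / (1-s)"
      using s a by (simp add: le_divide_eq)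
    ultimately show ?thesis using True s by simp
  next
    case False
    then have 2: "0 < a" using a by simp
    show ?thesis
    proof (cases "a = b")
      case True then show ?thesis by simp
    next
      case False
      then have ab: "a < b" using a by simp
      have der: "\<And>x. a \<le> x \<Longrightarrow> x \<le> b \<Longrightarrow> ((\<lambda>x. x powr (1-s)) has_real_derivative (1-s) * x powr (-s)) (at x)"
        using has_real_derivative_powr[of _ "1-s"] 2 by fastforce
      obtain z where z: "a < z" "z < b" "b powr (1-s) - a powr (1-s) = (b - a) * ((1-s) * z powr (-s))"
        using MVT2[OF ab der] by blast
      have "b powr (-s) \<le> z powr (-s)" using z 2 s by (intro powr_mono2') auto
      then have "(b - a) * b powr (-s) \<le> (b - a) * z powr (-s)" using ab by (intro mult_left_mono) auto
      also have "\<dots> = (b powr (1-s) - a powr (1-s)) / (1-s)" using z(3) s by (simp add: field_simps)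
      finally show ?thesis .
    qed
  qed
qed

lemma conc2:
  fixes a b s :: real
  assumes s: "0 < s" and a: "0 < a" "a \<le> b"
  shows "(b - a) * b powr (-s-1) \<le> (a powr (-s) - b powr (-s)) / s"
proof (cases "a = b")
  case True then show ?thesis by (simp add: True zero_le_divide_iff)
next
  case False
  then have ab: "a < b" using a by simp
  have der: "\<And>x. a \<le> x \<Longrightarrow> x \<le> b \<Longrightarrow> ((\<lambda>x. x powr (-s)) has_real_derivative (-s) * x powr (-s-1)) (at x)"
    using has_real_derivative_powr[of _ "-s"] a by force
  obtain z where z: "a < z" "z < b" "b powr (-s) - a powr (-s) = (b - a) * ((-s) * z powr (-s-1))"
    using MVT2[OF ab der] by blast
  have "b powr (-s-1) \<le> z powr (-s-1)" using z a s by (intro powr_mono2') auto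
  then have "(b - a) * b powr (-s-1) \<le> (b - a) * z powr (-s-1)" using ab by (intro mult_left_mono) auto
  also have "\<dots> = (a powr (-s) - b powr (-s)) / s" using z(3) s by (simp add: field_simps)
  finally show ?thesis .
qed

definition Gt :: "real \<Rightarrow> real \<Rightarrow> real \<Rightarrow> real" where
  "Gt s \<eta> t = (min t 1) powr (1-s) / ((1-s) * \<eta>) + (2 powr s - (max t (1/2)) powr (-s)) / s"

lemma Gt_mono1: fixes u t :: real shows "0 < s \<Longrightarrow> s < 1 \<Longrightarrow> 0 < \<eta> \<Longrightarrow> 0 \<le> u \<Longrightarrow> u \<le> t \<Longrightarrow>
   (min u 1) powr (1-s) / ((1-s) * \<eta>) \<le> (min t 1) powr (1-s) / ((1-s) * \<eta>)"
  by (intro divide_right_mono powr_mono2) auto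

lemma Gt_mono2: fixes u t :: real shows "0 < s \<Longrightarrow> u \<le> t \<Longrightarrow>
   (2 powr s - (max u (1/2)) powr (-s)) / s \<le> (2 powr s - (max t (1/2)) powr (-s)) / s"
  by (intro divide_right_mono diff_left_mono powr_mono2') auto

lemma term_le:
  fixes t d s \<eta> :: real
  assumes s: "0 < s" "s < 1" and e: "0 < \<eta>" and d: "0 < d" "d \<le> 1/2" and t: "d \<le> t"
  shows "d * t powr (-s) / (\<eta> + t) \<le> Gt s \<eta> t - Gt s \<eta> (t - d)"
proof -
  have t0: "0 < t" using t d by linarith
  have m1: "(min (t-d) 1) powr (1-s) / ((1-s) * \<eta>) \<le> (min t 1) powr (1-s) / ((1-s) * \<eta>)"
    using Gt_mono1[OF s e, of "t-d" t] t d by auto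
  have m2: "(2 powr s - (max (t-d) (1/2)) powr (-s)) / s \<le> (2 powr s - (max t (1/2)) powr (-s)) / s"
    using Gt_mono2[OF s(1), of "t-d" t] d by auto
  show ?thesis
  proof (cases "t \<le> 1")
    case True
    have "d * t powr (-s) / (\<eta> + t) \<le> d * t powr (-s) / \<eta>"
      using e t0 d by (intro divide_left_mono) auto
    also have "\<dots> = (t - (t-d)) * t powr (-s) / \<eta>" by simp
    also have "\<dots> \<le> ((t powr (1-s) - (t-d) powr (1-s)) / (1-s)) / \<eta>"
      using conc1[OF s, of "t-d" t] t t0 e d by (intro divide_right_mono) auto
    also have "\<dots> = (min t 1) powr (1-s) / ((1-s) * \<eta>) - (min (t-d) 1) powr (1-s) / ((1-s) * \<eta>)"
      using True d by (simp add: min_def diff_divide_distrib)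
    finally show ?thesis using m2 unfolding Gt_def by linarith
  next
    case False
    have "d * t powr (-s) / (\<eta> + t) \<le> d * t powr (-s) / t"
      using e t0 d by (intro divide_left_mono) auto
    also have "\<dots> = (t - (t-d)) * t powr (-s-1)"
      using t0 by (simp add: powr_diff powr_minus field_simps)
    also have "\<dots> \<le> ((t-d) powr (-s) - t powr (-s)) / s"
      using conc2[OF s(1), of "t-d" t] d False by auto
    also have "\<dots> = (2 powr s - (max t (1/2)) powr (-s)) / s - (2 powr s - (max (t-d) (1/2)) powr (-s)) / s"
      using False d s by (simp add: max_def field_simps)
    finally show ?thesis using m1 unfolding Gt_def by linarith
  qed
qed

lemma sum_terms_le:
  assumes s: "0 < s" "s < 1" and e: "0 < \<eta>" and d: "0 < d" "d \<le> 1/2"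
  shows "(\<Sum>i<N. d * (real (Suc i) * d) powr (-s) / (\<eta> + real (Suc i) * d)) \<le> 1 / ((1-s) * \<eta>) + 2 / s"
proof -
  have "(\<Sum>i<N. d * (real (Suc i) * d) powr (-s) / (\<eta> + real (Suc i) * d))
      \<le> (\<Sum>i<N. Gt s \<eta> (real (Suc i) * d) - Gt s \<eta> (real i * d))"
  proof (rule sum_mono)
    fix i assume "i \<in> {..<N}"
    have "d \<le> real (Suc i) * d" using d by simp
    then show "d * (real (Suc i) * d) powr (-s) / (\<eta> + real (Suc i) * d)
        \<le> Gt s \<eta> (real (Suc i) * d) - Gt s \<eta> (real i * d)"
      using term_le[OF s e d, of "real (Suc i) * d"] by (simp add: algebra_simps)
  qed
  also have "\<dots> = Gt s \<eta> (real N * d) - Gt s \<eta> 0"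
    using sum_lessThan_telescope[of "\<lambda>i. Gt s \<eta> (real i * d)" N] by simp
  also have "Gt s \<eta> 0 = 0"
    by (simp add: Gt_def powr_minus_divide powr_divide)
  also have "Gt s \<eta> (real N * d) \<le> 1 / ((1-s) * \<eta>) + 2 / s"
  proof -
    have "0 \<le> real N * d" using d by simp
    then have "(min (real N * d) 1) powr (1-s) \<le> 1 powr (1-s)" using d s
      by (intro powr_mono2) auto
    then have "(min (real N * d) 1) powr (1-s) \<le> 1" by simp
    then have a: "(min (real N * d) 1) powr (1-s) / ((1-s) * \<eta>) \<le> 1 / ((1-s) * \<eta>)"
      using s e by (intro divide_right_mono) auto
    have p1: "2 powr s \<le> 2 powr 1" using s by (intro powr_mono) auto
    have p2: "0 \<le> (max (real N * d) (1/2)) powr (-s)" by simp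
    have "2 powr s - (max (real N * d) (1/2)) powr (-s) \<le> 2" using p1 p2 by (simp del: powr_ge_zero)
    then have b: "(2 powr s - (max (real N * d) (1/2)) powr (-s)) / s \<le> 2 / s"
      using s by (intro divide_right_mono) auto
    show ?thesis using a b unfolding Gt_def by linarith
  qed
  finally show ?thesis by simp
qed

lemma disc:
  fixes \<psi> :: "real \<Rightarrow> complex"
  assumes cont: "continuous_on {0..1} \<psi>" and N: "N > 0" and e: "0 \<le> e"
    and uc: "\<And>u v. u \<in> {0..1} \<Longrightarrow> v \<in> {0..1} \<Longrightarrow> \<bar>u - v\<bar> \<le> 1 / real N \<Longrightarrow> norm (\<psi> u - \<psi> v) \<le> e"
  shows "norm (integral {0..1} \<psi> - (\<Sum>j<N. \<psi> (real j / real N) / of_nat N)) \<le> e"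
proof -
  have N0: "real N > 0" using N by simp
  have step: "norm (integral {0..real m / real N} \<psi> - (\<Sum>j<m. \<psi> (real j / real N) / of_nat N)) \<le> real m * e / real N"
    if "m \<le> N" for m
    using that
  proof (induction m)
    case 0 then show ?case by simp
  next
    case (Suc m)
    define a where "a = real m / real N"
    define b where "b = real (Suc m) / real N"
    have ab: "0 \<le> a" "a \<le> b" "b \<le> 1" "b - a = 1 / real N"
      using Suc.prems N0 by (auto simp: a_def b_def divide_right_mono field_simps)
    have int: "\<psi> integrable_on {0..b}"
      by (rule integrable_continuous_interval, rule continuous_on_subset[OF cont]) (use ab in auto)
    have comb: "integral {0..a} \<psi> + integral {a..b} \<psi> = integral {0..b} \<psi>"
      by (rule Henstock_Kurzweil_Integration.integral_combine[OF ab(1,2) int])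
    have inta: "\<psi> integrable_on {a..b}"
      by (rule integrable_continuous_interval, rule continuous_on_subset[OF cont]) (use ab in auto)
    have hi: "((\<lambda>u. \<psi> u - \<psi> a) has_integral (integral {a..b} \<psi> - (b - a) *\<^sub>R \<psi> a)) {a..b}"
    proof (intro has_integral_diff integrable_integral inta)
      show "((\<lambda>x. \<psi> a) has_integral (b - a) *\<^sub>R \<psi> a) {a..b}"
        using has_integral_const_real[of "\<psi> a" a b] ab by simp
    qed
    have "norm (integral {a..b} \<psi> - (b - a) *\<^sub>R \<psi> a) \<le> e * Henstock_Kurzweil_Integration.content (cbox a b)"
    proof (rule has_integral_bound[OF e])
      show "((\<lambda>u. \<psi> u - \<psi> a) has_integral (integral {a..b} \<psi> - (b - a) *\<^sub>R \<psi> a)) (cbox a b)"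
        using hi by simp
      fix u assume "u \<in> cbox a b"
      then have "a \<le> u" "u \<le> b" by auto
      then show "norm (\<psi> u - \<psi> a) \<le> e" using ab by (intro uc) auto
    qed
    also have "e * Henstock_Kurzweil_Integration.content (cbox a b) = e / real N" using ab by simp
    also have "(b - a) *\<^sub>R \<psi> a = \<psi> (real m / real N) / of_nat N"
      using ab by (simp add: a_def scaleR_conv_of_real divide_inverse mult.commute)
    finally have piece: "norm (integral {a..b} \<psi> - \<psi> (real m / real N) / of_nat N) \<le> e / real N" .
    have IH: "norm (integral {0..a} \<psi> - (\<Sum>j<m. \<psi> (real j / real N) / of_nat N)) \<le> real m * e / real N"
      using Suc by (simp add: a_def)
    have "integral {0..real (Suc m) / real N} \<psi> - (\<Sum>j<Suc m. \<psi> (real j / real N) / of_nat N)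
        = (integral {0..a} \<psi> - (\<Sum>j<m. \<psi> (real j / real N) / of_nat N))
          + (integral {a..b} \<psi> - \<psi> (real m / real N) / of_nat N)"
      using comb by (simp add: b_def)
    also have "norm \<dots> \<le> real m * e / real N + e / real N"
      using norm_triangle_le[OF add_mono[OF IH piece]] by simp
    also have "\<dots> = real (Suc m) * e / real N" by (simp add: algebra_simps add_divide_distrib)
    finally show ?case .
  qed
  show ?thesis using step[of N] N0 by simp
qed

lemma arc_bound:
  assumes c: "c = 1 \<or> c = -1" and s: "0 < s" "s < 1" and k: "0 < k" and x0: "0 < x0" "x0 \<le> 1" and R: "2 \<le> R"
  shows "norm (contour_integral (part_circlepath 0 R ((1-c)*pi) pi) (\<lambda>z. hb s k c z / (z - of_real x0)))
         \<le> 2 * pi / (sin (s*pi) * R powr s)"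
proof -
  let ?arc = "part_circlepath 0 R ((1-c)*pi) pi"
  have R0: "0 < R" using R by simp
  have sph: "path_image ?arc \<subseteq> sphere 0 R"
    by (rule path_image_part_circlepath_subset') (use R0 in auto)
  have sub: "path_image ?arc \<subseteq> {z. c * Im z \<ge> 0} \<inter> {z. z \<noteq> of_real x0}"
    using sph arc_image[OF c, of R] R0 x0 R by auto
  have i1: "(\<lambda>z. hb s k c z / (z - of_real x0)) contour_integrable_on ?arc"
    by (rule contour_integrable_continuous_part_circlepath, 
        use sub in \<open>auto intro!: continuous_intros intro: continuous_on_subset[OF hb_cont[OF c s k]]\<close>)
  have sp: "0 < sin (s*pi)" by (rule sin_spi_pos[OF s])
  have Rs: "0 < R powr s" using R0 by simp
  define B where "B = 2 / (sin (s*pi) * R powr s * R)"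
  have B0: "0 \<le> B" using sp Rs R0 by (simp add: B_def)
  have bnd: "norm (hb s k c z / (z - of_real x0)) \<le> B" if z: "z \<in> path_image ?arc" for z
  proof -
    have nz: "norm z = R" using z sph by auto
    have z0: "z \<noteq> 0" using nz R0 by auto
    have h: "norm (hb s k c z) \<le> 1 / (sin (s*pi) * R powr s)"
      using hb_bound[OF c _ s less_imp_le[OF k] z0] sub z nz by auto
    have d: "R / 2 \<le> norm (z - of_real x0)"
    proof -
      have "norm z - norm (of_real x0 :: complex) \<le> norm (z - of_real x0)" by (rule norm_triangle_ineq2)
      then show ?thesis using nz x0 R by simp
    qed
    have "norm (hb s k c z / (z - of_real x0)) = norm (hb s k c z) / norm (z - of_real x0)"
      by (simp add: norm_divide)
    also have "\<dots> \<le> (1 / (sin (s*pi) * R powr s)) / (R / 2)"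
      using h d R0 sp Rs by (intro frac_le) auto
    also have "\<dots> = B" by (simp add: B_def field_simps)
    finally show ?thesis .
  qed
  have "norm (contour_integral ?arc (\<lambda>z. hb s k c z / (z - of_real x0))) \<le> B * R * \<bar>pi - (1-c)*pi\<bar>"
    by (rule contour_integral_bound_part_circlepath[OF i1 B0]) (use R0 bnd in auto)
  also have "\<bar>pi - (1-c)*pi\<bar> = pi" using c by auto
  also have "B * R * pi = 2 * pi / (sin (s*pi) * R powr s)" using R0 by (simp add: B_def field_simps)
  finally show ?thesis .
qed

lemma alg1:
  fixes X Y P :: complex and R :: real
  shows "X / (- Y) * (0 - of_real (- R)) / P = - (of_real R * X / P) / Y"
  by (simp add: divide_inverse mult_ac)

lemma line_to_real:
  assumes s: "0 < s" "s < 1" and k: "0 < k" and x0: "0 < x0" and R: "0 < R"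
  defines "D \<equiv> \<lambda>z::complex. (hb s k 1 z - hb s k (-1) z) / (z - of_real x0)"
  and "\<Phi> \<equiv> \<lambda>u. of_real R * (hb s k 1 (of_real (-R*(1-u))) - hb s k (-1) (of_real (-R*(1-u)))) / (2 * of_real pi * \<i>)"
  shows "((\<lambda>u. - \<Phi> u / of_real (R*(1-u) + x0)) has_integral
          (contour_integral (linepath (of_real (-R)) 0) D / (2 * of_real pi * \<i>))) {0..1}"
proof -
  have segsub: "closed_segment (of_real (-R)) (0::complex) \<subseteq> {z. Im z = 0 \<and> Re z \<le> 0}"
  proof
    fix z :: complex assume "z \<in> closed_segment (of_real (-R)) 0"
    then obtain t where "z = of_real t" "-R \<le> t" "t \<le> 0" using real_seg[of z "-R" 0] R by auto
    then show "z \<in> {z. Im z = 0 \<and> Re z \<le> 0}" by simp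
  qed
  have cD: "continuous_on (closed_segment (of_real (-R)) 0) D"
    unfolding D_def
    by (intro continuous_intros continuous_on_subset[OF hb_cont[of 1, OF _ s k]]
        continuous_on_subset[OF hb_cont[of "-1", OF _ s k]]) (use segsub x0 in auto)
  have "D contour_integrable_on linepath (of_real (-R)) 0"
    by (rule contour_integrable_continuous_linepath[OF cD])
  then have "(D has_contour_integral contour_integral (linepath (of_real (-R)) 0) D) (linepath (of_real (-R)) 0)"
    by (rule has_contour_integral_integral)
  then have "((\<lambda>u. D (linepath (of_real (-R)) 0 u) * (0 - of_real (-R))) has_integral
              contour_integral (linepath (of_real (-R)) 0) D) {0..1}"
    by (simp add: has_contour_integral_linepath)
  then have hi: "((\<lambda>u. D (linepath (of_real (-R)) 0 u) * (0 - of_real (-R)) / (2 * of_real pi * \<i>)) has_integral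
              (contour_integral (linepath (of_real (-R)) 0) D / (2 * of_real pi * \<i>))) {0..1}"
    by (rule has_integral_divide)
  show ?thesis
  proof (rule has_integral_cong[THEN iffD1, OF _ hi])
    fix u :: real assume u: "u \<in> {0..1}"
    have lp: "linepath (of_real (-R)) (0::complex) u = of_real (-R*(1-u))"
      by (simp add: linepath_def scaleR_conv_of_real algebra_simps)
    have pos: "0 < R*(1-u) + x0" using u R x0 by (simp add: add_nonneg_pos)
    have e: "of_real (-R*(1-u)) - of_real x0 = - (of_real (R*(1-u) + x0) :: complex)" by (simp add: algebra_simps)
    have nz: "(of_real (R*(1-u) + x0) :: complex) \<noteq> 0" using pos by (simp del: of_real_add)
    show "D (linepath (of_real (-R)) 0 u) * (0 - of_real (-R)) / (2 * of_real pi * \<i>) =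
          - \<Phi> u / of_real (R*(1-u) + x0)"
      unfolding lp D_def \<Phi>_def e by (rule alg1)
  qed
qed

lemma alg2:
  fixes X Y :: complex and a b :: real
  assumes "a \<noteq> 0" "b \<noteq> 0"
  shows "X / of_real a - Y / of_real b = (X - Y) / of_real a + Y * of_real (b - a) / (of_real a * of_real b)"
  using assms by (simp add: field_simps)

lemma alg3:
  fixes r n e b x :: real
  assumes "0 < n" "0 < e + b" "0 < x + b"
  shows "r / (n * (e + b)) * ((e + b) / (x + b)) = r / (b + x) / n"
proof -
  have "r / (n * (e + b)) * ((e + b) / (x + b)) = (r * (e + b)) / ((e + b) * (n * (x + b)))"
    by (simp add: mult_ac)
  also have "\<dots> = r / (n * (x + b))" using assms by simp
  also have "\<dots> = r / (b + x) / n" by (simp add: add.commute)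
  finally show ?thesis .
qed

lemma approx_pos:
  assumes e: "0 < \<eta>" "\<eta> < 1" and s: "0 < s" "s < 1" and k: "0 < k" and \<epsilon>: "0 < \<epsilon>"
  shows "\<exists>m::nat. \<exists>c b :: nat \<Rightarrow> real. (\<forall>j<m. 0 < b j) \<and> (\<Sum>j<m. \<bar>c j\<bar>) \<le> (1 / (pi * sin (s*pi))) * (1 / ((1-s)*\<eta>) + 2/s)
     \<and> (\<forall>x\<in>{\<eta>..1}. \<bar>1 / (x powr s + k) - (\<Sum>j<m. c j * gdict \<eta> (b j) x)\<bar> \<le> \<epsilon>)"
proof -
  define \<sigma> where "\<sigma> = sin (s*pi)"
  have \<sigma>: "0 < \<sigma>" unfolding \<sigma>_def by (rule sin_spi_pos[OF s])
  define R where "R = max 2 ((4/(\<sigma>*\<epsilon>)) powr (1/s))"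
  have R2: "2 \<le> R" and R0: "0 < R" unfolding R_def by auto
  have Rs: "4/(\<sigma>*\<epsilon>) \<le> R powr s"
  proof -
    have "4/(\<sigma>*\<epsilon>) = ((4/(\<sigma>*\<epsilon>)) powr (1/s)) powr s"
      using \<sigma> \<epsilon> s by (simp add: powr_powr)
    also have "\<dots> \<le> R powr s" unfolding R_def using s by (intro powr_mono2) auto
    finally show ?thesis .
  qed
  have errb: "2 / (\<sigma> * R powr s) \<le> \<epsilon>/2"
  proof -
    have "4/\<epsilon> \<le> \<sigma> * R powr s" using Rs \<sigma> \<epsilon> by (simp add: field_simps)
    then have "2 / (\<sigma> * R powr s) \<le> 2 / (4/\<epsilon>)" using \<epsilon> \<sigma> R0 by (intro divide_left_mono) auto
    also have "\<dots> = \<epsilon>/2" by simp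
    finally show ?thesis .
  qed
  define \<Phi> where "\<Phi> = (\<lambda>u. of_real R * (hb s k 1 (of_real (-R*(1-u))) - hb s k (-1) (of_real (-R*(1-u)))) / (2 * of_real pi * \<i>))"
  have cc: "continuous_on {0..1} (\<lambda>u. hb s k c (of_real (-R*(1-u))))" if c: "c = 1 \<or> c = -1" for c
    by (rule continuous_on_compose2[OF hb_cont[OF c s k]]) (auto intro!: continuous_intros)
  have contPhi: "continuous_on {0..1} \<Phi>"
    unfolding \<Phi>_def using cc[of 1] cc[of "-1"] by (intro continuous_intros) auto
  obtain B where B: "0 < B" "\<And>u. u \<in> {0..1} \<Longrightarrow> norm (\<Phi> u) \<le> B"
  proof -
    have "bounded (\<Phi> ` {0..1})"
      by (rule compact_imp_bounded, rule compact_continuous_image[OF contPhi]) simp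
    then show ?thesis using that unfolding bounded_pos by blast
  qed
  obtain \<delta> where \<delta>: "0 < \<delta>" "\<And>u v. u \<in> {0..1} \<Longrightarrow> v \<in> {0..1} \<Longrightarrow> dist v u < \<delta> \<Longrightarrow> dist (\<Phi> v) (\<Phi> u) < \<epsilon>*\<eta>/4"
  proof -
    have "uniformly_continuous_on {0..1} \<Phi>"
      by (rule compact_uniformly_continuous[OF contPhi]) simp
    moreover have "0 < \<epsilon>*\<eta>/4" using \<epsilon> e by simp
    ultimately show ?thesis using that unfolding uniformly_continuous_on_def by metis
  qed
  define X where "X = 1/\<delta> + 4*B*R/(\<epsilon>*\<eta>^2) + 2*R"
  define N where "N = Suc (nat \<lceil>X\<rceil>)"
  have t1: "0 < 1/\<delta>" using \<delta> by simp
  have t2: "0 \<le> 4*B*R/(\<epsilon>*\<eta>^2)" using B R0 \<epsilon> e by simp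
  have X0: "0 \<le> X" unfolding X_def using t1 t2 R0 by linarith
  have NX: "X < real N" unfolding N_def using X0 by linarith
  have N0: "0 < N" "0 < real N" unfolding N_def by auto
  have N\<delta>: "1/real N < \<delta>"
  proof -
    have "1/\<delta> < real N" using NX t2 R0 unfolding X_def by linarith
    then show ?thesis using \<delta> N0 by (simp add: field_simps)
  qed
  have NB: "B * R / (real N * \<eta>^2) \<le> \<epsilon>/4"
  proof -
    have "4*B*R/(\<epsilon>*\<eta>^2) \<le> real N" using NX t1 R0 unfolding X_def by linarith
    then show ?thesis using N0 \<epsilon> e by (simp add: field_simps)
  qed
  define d where "d = R / real N"
  have d: "0 < d" "d \<le> 1/2"
  proof -
    show "0 < d" using R0 N0 by (simp add: d_def)
    have "2*R \<le> real N" using NX t1 t2 unfolding X_def by linarith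
    then show "d \<le> 1/2" using N0 by (simp add: d_def field_simps)
  qed
  define b where "b = (\<lambda>j::nat. R * (1 - real j / real N))"
  define c where "c = (\<lambda>j::nat. Re (- \<Phi> (real j / real N)) / (real N * (\<eta> + b j)))"
  have bpos: "0 < b j" if "j < N" for j
    using that N0 R0 by (simp add: b_def field_simps)
  have part1: "\<forall>j<N. 0 < b j" using bpos by blast
  have Phib: "norm (\<Phi> u) \<le> R / (pi * \<sigma> * (R*(1-u)) powr s)" if u: "0 \<le> u" "u < 1" for u
  proof -
    have t: "0 < R*(1-u)" using u R0 by simp
    have nz: "(of_real (-R*(1-u)) :: complex) \<noteq> 0" using u R0 by simp
    have nm: "norm (of_real (-R*(1-u)) :: complex) = R*(1-u)" unfolding norm_of_real using R0 u by (simp add: abs_mult)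
    have h: "norm (hb s k c (of_real (-R*(1-u)))) \<le> 1/(\<sigma> * (R*(1-u)) powr s)" if c: "c = 1 \<or> c = -1" for c
      using hb_bound[OF c _ s less_imp_le[OF k] nz] nm by (simp add: \<sigma>_def)
    have "norm (\<Phi> u) = R * norm (hb s k 1 (of_real (-R*(1-u))) - hb s k (-1) (of_real (-R*(1-u)))) / (2*pi)"
      unfolding \<Phi>_def using R0 by (simp add: norm_divide norm_mult)
    also have "\<dots> \<le> R * (2 * (1/(\<sigma> * (R*(1-u)) powr s))) / (2*pi)"
    proof -
      have "norm (hb s k 1 (of_real (-R*(1-u))) - hb s k (-1) (of_real (-R*(1-u)))) \<le> 2 * (1/(\<sigma> * (R*(1-u)) powr s))"
        using norm_triangle_ineq4[of "hb s k 1 (of_real (-R*(1-u)))" "hb s k (-1) (of_real (-R*(1-u)))"] h[of 1] h[of "-1"] by simp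
      then show ?thesis using R0 by (intro divide_right_mono mult_left_mono) auto
    qed
    also have "\<dots> = R / (pi * \<sigma> * (R*(1-u)) powr s)" by (simp add: field_simps)
    finally show ?thesis .
  qed
  have cb: "\<bar>c j\<bar> \<le> (1 / (pi * \<sigma>)) * (d * (b j) powr (-s) / (\<eta> + b j))" if j: "j < N" for j
  proof -
    have u: "0 \<le> real j / real N" "real j / real N < 1" using j N0 by (auto simp: field_simps)
    have bj: "0 < b j" using bpos[OF j] .
    have "\<bar>c j\<bar> = \<bar>Re (- \<Phi> (real j / real N))\<bar> / (real N * (\<eta> + b j))"
      unfolding c_def using bj e N0 by (simp add: abs_divide)
    also have "\<dots> \<le> norm (\<Phi> (real j / real N)) / (real N * (\<eta> + b j))"
      using bj e N0 abs_Re_le_cmod[of "- \<Phi> (real j / real N)"] by (intro divide_right_mono) auto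
    also have "\<dots> \<le> (R / (pi * \<sigma> * (b j) powr s)) / (real N * (\<eta> + b j))"
      using Phib[OF u] bj e N0 by (intro divide_right_mono) (auto simp: b_def)
    also have "\<dots> = (1 / (pi * \<sigma>)) * (d * (b j) powr (-s) / (\<eta> + b j))"
      using bj by (simp add: d_def powr_minus field_simps)
    finally show ?thesis .
  qed
  have part2: "(\<Sum>j<N. \<bar>c j\<bar>) \<le> (1 / (pi * sin (s*pi))) * (1 / ((1-s)*\<eta>) + 2/s)"
  proof -
    have "(\<Sum>j<N. \<bar>c j\<bar>) \<le> (\<Sum>j<N. (1 / (pi * \<sigma>)) * (d * (b j) powr (-s) / (\<eta> + b j)))"
      using cb by (intro sum_mono) auto
    also have "\<dots> = (1 / (pi * \<sigma>)) * (\<Sum>j<N. d * (b j) powr (-s) / (\<eta> + b j))"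
      by (simp add: sum_distrib_left)
    also have "(\<Sum>j<N. d * (b j) powr (-s) / (\<eta> + b j)) =
        (\<Sum>i<N. d * (real (Suc i) * d) powr (-s) / (\<eta> + real (Suc i) * d))"
    proof -
      have "(\<Sum>j<N. d * (b j) powr (-s) / (\<eta> + b j)) = (\<Sum>i<N. d * (b (N - Suc i)) powr (-s) / (\<eta> + b (N - Suc i)))"
        by (rule sum.nat_diff_reindex[symmetric])
      also have "\<dots> = (\<Sum>i<N. d * (real (Suc i) * d) powr (-s) / (\<eta> + real (Suc i) * d))"
      proof (rule sum.cong[OF refl])
        fix i assume i: "i \<in> {..<N}"
        have "real (N - Suc i) = real N - real (Suc i)" using i by (simp add: of_nat_diff)
        then have "b (N - Suc i) = real (Suc i) * d" using N0 by (simp add: b_def d_def field_simps)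
        then show "d * (b (N - Suc i)) powr (-s) / (\<eta> + b (N - Suc i)) = d * (real (Suc i) * d) powr (-s) / (\<eta> + real (Suc i) * d)"
          by simp
      qed
      finally show ?thesis .
    qed
    also have "(1 / (pi * \<sigma>)) * (\<Sum>i<N. d * (real (Suc i) * d) powr (-s) / (\<eta> + real (Suc i) * d))
        \<le> (1 / (pi * \<sigma>)) * (1 / ((1-s)*\<eta>) + 2/s)"
      using sum_terms_le[OF s e(1) d, of N] \<sigma> by (intro mult_left_mono) auto
    finally show ?thesis by (simp add: \<sigma>_def)
  qed
  have part3: "\<bar>1 / (x powr s + k) - (\<Sum>j<N. c j * gdict \<eta> (b j) x)\<bar> \<le> \<epsilon>" if x: "x \<in> {\<eta>..1}" for x
  proof -
    have xpos: "0 < x" and x1: "x \<le> 1" and xe: "\<eta> \<le> x" using x e by auto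
    have xR: "x < R" using x1 R2 by linarith
    define \<psi> where "\<psi> = (\<lambda>u. - \<Phi> u / of_real (R*(1-u) + x))"
    define L where "L = contour_integral (linepath (of_real (-R)) 0) (\<lambda>z::complex. (hb s k 1 z - hb s k (-1) z) / (z - of_real x))"
    define A1 where "A1 = contour_integral (part_circlepath 0 R ((1-1)*pi) pi) (\<lambda>z. hb s k 1 z / (z - of_real x))"
    define A2 where "A2 = contour_integral (part_circlepath 0 R ((1 - -1)*pi) pi) (\<lambda>z. hb s k (-1) z / (z - of_real x))"
    have HI: "(\<psi> has_integral (L / (2 * of_real pi * \<i>))) {0..1}"
      using line_to_real[OF s k xpos R0] unfolding \<psi>_def \<Phi>_def L_def .
    have rep: "hp s k (of_real x) * (2 * of_real pi * \<i>) = L + A1 - A2"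
      using rep_identity[OF s k xpos xR] unfolding L_def A1_def A2_def .
    have a1: "norm A1 \<le> 2 * pi / (\<sigma> * R powr s)"
      using arc_bound[of 1, OF _ s k xpos x1 R2] unfolding A1_def \<sigma>_def by simp
    have a2: "norm A2 \<le> 2 * pi / (\<sigma> * R powr s)"
      using arc_bound[of "-1", OF _ s k xpos x1 R2] unfolding A2_def \<sigma>_def by simp
    have pi0: "(2 * of_real pi * \<i> :: complex) \<noteq> 0" by simp
    have E: "of_real (1/(x powr s + k)) = integral {0..1} \<psi> + (A1 - A2) / (2 * of_real pi * \<i>)"
    proof -
      have "hp s k (of_real x) = (L + A1 - A2) / (2 * of_real pi * \<i>)"
        using rep pi0 by (simp add: field_simps)
      then show ?thesis using integral_unique[OF HI] hp_real[OF xpos, of s k]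
        by (simp add: add_divide_distrib diff_divide_distrib)
    qed
    have Eb: "norm ((A1 - A2) / (2 * of_real pi * \<i>)) \<le> \<epsilon>/2"
    proof -
      have "norm ((A1 - A2) / (2 * of_real pi * \<i>)) = norm (A1 - A2) / (2*pi)"
        by (simp add: norm_divide norm_mult)
      also have "\<dots> \<le> (2 * (2 * pi / (\<sigma> * R powr s))) / (2*pi)"
        using norm_triangle_ineq4[of A1 A2] a1 a2 by (intro divide_right_mono) auto
      also have "\<dots> = 2 / (\<sigma> * R powr s)" by simp
      also have "\<dots> \<le> \<epsilon>/2" by (rule errb)
      finally show ?thesis .
    qed
    have den: "\<eta> \<le> R*(1-u) + x" if "u \<in> {0..1}" for u
      using that R0 xe by (simp add: add_increasing)
    have contpsi: "continuous_on {0..1} \<psi>"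
      unfolding \<psi>_def using den e
      by (intro continuous_intros contPhi) (force simp del: of_real_add)
    have uc: "norm (\<psi> u - \<psi> v) \<le> \<epsilon>/2" if uv: "u \<in> {0..1}" "v \<in> {0..1}" "\<bar>u - v\<bar> \<le> 1 / real N" for u v
    proof -
      define a where "a = R*(1-u) + x"
      define a' where "a' = R*(1-v) + x"
      have a: "\<eta> \<le> a" "\<eta> \<le> a'" using den[OF uv(1)] den[OF uv(2)] by (auto simp: a_def a'_def)
      have a0: "a \<noteq> 0" "a' \<noteq> 0" using a e by auto
      have "\<psi> u - \<psi> v = - (\<Phi> u / of_real a - \<Phi> v / of_real a')" by (simp add: \<psi>_def a_def a'_def)
      also have "\<dots> = - ((\<Phi> u - \<Phi> v) / of_real a + \<Phi> v * of_real (a' - a) / (of_real a * of_real a'))"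
        by (simp only: alg2[OF a0])
      finally have "norm (\<psi> u - \<psi> v) \<le> norm ((\<Phi> u - \<Phi> v) / of_real a) + norm (\<Phi> v * of_real (a' - a) / (of_real a * of_real a'))"
        by (simp only: norm_minus_cancel norm_triangle_ineq)
      also have "norm ((\<Phi> u - \<Phi> v) / of_real a) \<le> \<epsilon>/4"
      proof -
        have "dist u v < \<delta>" using uv(3) N\<delta> by (simp add: dist_real_def)
        then have "dist (\<Phi> u) (\<Phi> v) < \<epsilon>*\<eta>/4" using \<delta>(2)[OF uv(2) uv(1)] by blast
        then have "norm (\<Phi> u - \<Phi> v) \<le> \<epsilon>*\<eta>/4" by (simp add: dist_norm)
        moreover have "norm ((\<Phi> u - \<Phi> v) / of_real a) = norm (\<Phi> u - \<Phi> v) / a"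
          using a e by (simp add: norm_divide)
        ultimately have "norm ((\<Phi> u - \<Phi> v) / of_real a) \<le> (\<epsilon>*\<eta>/4) / \<eta>"
          using a e by (smt (verit) divide_mono norm_ge_zero)
        also have "\<dots> = \<epsilon>/4" using e by simp
        finally show ?thesis .
      qed
      also have "norm (\<Phi> v * of_real (a' - a) / (of_real a * of_real a')) \<le> \<epsilon>/4"
      proof -
        have n: "norm (\<Phi> v * of_real (a' - a) / (of_real a * of_real a')) = norm (\<Phi> v) * \<bar>a' - a\<bar> / (a * a')"
          using a e by (simp add: norm_divide norm_mult del: of_real_diff)
        have "a' - a = R * (u - v)" by (simp add: a_def a'_def algebra_simps)
        then have "\<bar>a' - a\<bar> = R * \<bar>u - v\<bar>" using R0 by (simp add: abs_mult)
        also have "\<dots> \<le> R * (1 / real N)" using uv(3) R0 by (intro mult_left_mono) auto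
        finally have d1: "\<bar>a' - a\<bar> \<le> R / real N" by simp
        have d2: "\<eta>^2 \<le> a * a'" using a e by (simp add: power2_eq_square mult_mono)
        have "norm (\<Phi> v) * \<bar>a' - a\<bar> \<le> B * (R / real N)"
          using B(2)[OF uv(2)] B(1) d1 by (intro mult_mono) auto
        then have "norm (\<Phi> v) * \<bar>a' - a\<bar> / (a * a') \<le> B * (R / real N) / \<eta>^2"
          using d2 e B(1) R0 N0 by (intro frac_le) auto
        also have "\<dots> = B * R / (real N * \<eta>^2)" by simp
        also have "\<dots> \<le> \<epsilon>/4" by (rule NB)
        finally show ?thesis using n by simp
      qed
      finally show ?thesis by simp
    qed
    have D: "norm (integral {0..1} \<psi> - (\<Sum>j<N. \<psi> (real j / real N) / of_nat N)) \<le> \<epsilon>/2"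
      by (rule disc[OF contpsi N0(1)]) (use \<epsilon> uc in auto)
    have tot: "norm (of_real (1/(x powr s + k)) - (\<Sum>j<N. \<psi> (real j / real N) / of_nat N)) \<le> \<epsilon>"
    proof -
      have eq: "of_real (1/(x powr s + k)) - (\<Sum>j<N. \<psi> (real j / real N) / of_nat N)
          = (integral {0..1} \<psi> - (\<Sum>j<N. \<psi> (real j / real N) / of_nat N)) + (A1 - A2) / (2 * of_real pi * \<i>)"
        unfolding E by (simp add: algebra_simps)
      show ?thesis unfolding eq using norm_triangle_le[OF add_mono[OF D Eb]] by simp
    qed
    have ReQ: "Re (\<Sum>j<N. \<psi> (real j / real N) / of_nat N) = (\<Sum>j<N. c j * gdict \<eta> (b j) x)"
    proof -
      have "Re (\<psi> (real j / real N) / of_nat N) = c j * gdict \<eta> (b j) x" if j: "j < N" for j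
      proof -
        have bj: "0 < b j" using bpos[OF j] .
        have ofn: "(of_nat N :: complex) = of_real (real N)" by simp
        have r1: "Re (\<psi> (real j / real N) / of_nat N) = Re (\<psi> (real j / real N)) / real N"
          by (simp only: ofn Re_divide_of_real)
        have r2: "Re (\<psi> (real j / real N)) = Re (- \<Phi> (real j / real N)) / (b j + x)"
          unfolding \<psi>_def b_def by (simp only: Re_divide_of_real)
        have "Re (\<psi> (real j / real N) / of_nat N) = Re (- \<Phi> (real j / real N)) / (b j + x) / real N"
          using r1 r2 by simp
        also have "\<dots> = c j * gdict \<eta> (b j) x"
          unfolding c_def gdict_def using alg3[of "real N" \<eta> "b j" x] bj e xpos N0 by simp
        finally show ?thesis .
      qed
      then show ?thesis by (simp add: Re_sum)
    qed
    have "\<bar>Re (of_real (1/(x powr s + k)) - (\<Sum>j<N. \<psi> (real j / real N) / of_nat N))\<bar> \<le> \<epsilon>"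
      using abs_Re_le_cmod tot by (rule order_trans)
    then show ?thesis using ReQ by simp
  qed
  have "(\<forall>j<N. 0 < b j) \<and> (\<Sum>j<N. \<bar>c j\<bar>) \<le> (1 / (pi * sin (s*pi))) * (1 / ((1-s)*\<eta>) + 2/s)
     \<and> (\<forall>x\<in>{\<eta>..1}. \<bar>1 / (x powr s + k) - (\<Sum>j<N. c j * gdict \<eta> (b j) x)\<bar> \<le> \<epsilon>)"
    using part1 part2 part3 by blast
  then show ?thesis by blast
qed

lemma approx_all:
  assumes e: "0 < \<eta>" "\<eta> < 1" and s: "0 < s" "s < 1" and k: "0 \<le> k" and \<epsilon>: "0 < \<epsilon>"
  shows "\<exists>m::nat. \<exists>c b :: nat \<Rightarrow> real. (\<forall>j<m. 0 < b j) \<and> (\<Sum>j<m. \<bar>c j\<bar>) \<le> (1 / (pi * sin (s*pi))) * (1 / ((1-s)*\<eta>) + 2/s)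
     \<and> (\<forall>x\<in>{\<eta>..1}. \<bar>1 / (x powr s + k) - (\<Sum>j<m. c j * gdict \<eta> (b j) x)\<bar> \<le> \<epsilon>)"
proof -
  define q where "q = \<eta> powr s"
  have q: "0 < q" unfolding q_def using e by simp
  define \<delta> where "\<delta> = \<epsilon>/2 * (q * q)"
  have \<delta>: "0 < \<delta>" unfolding \<delta>_def using \<epsilon> q by simp
  obtain m :: nat and c b :: "nat \<Rightarrow> real" where mcb: "\<forall>j<m. 0 < b j"
    "(\<Sum>j<m. \<bar>c j\<bar>) \<le> (1 / (pi * sin (s*pi))) * (1 / ((1-s)*\<eta>) + 2/s)"
    "\<forall>x\<in>{\<eta>..1}. \<bar>1 / (x powr s + (k + \<delta>)) - (\<Sum>j<m. c j * gdict \<eta> (b j) x)\<bar> \<le> \<epsilon>/2"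
    using approx_pos[OF e s _, of "k + \<delta>" "\<epsilon>/2"] k \<delta> \<epsilon> by auto
  have "\<bar>1 / (x powr s + k) - (\<Sum>j<m. c j * gdict \<eta> (b j) x)\<bar> \<le> \<epsilon>" if x: "x \<in> {\<eta>..1}" for x
  proof -
    have xq: "q \<le> x powr s" unfolding q_def using x e s by (intro powr_mono2) auto
    have p1: "q \<le> x powr s + k" and p2: "q \<le> x powr s + (k + \<delta>)" using xq k \<delta> by auto
    have "1 / (x powr s + k) - 1 / (x powr s + (k + \<delta>)) = \<delta> / ((x powr s + k) * (x powr s + (k + \<delta>)))"
      using p1 p2 q by (simp add: field_simps)
    also have "\<dots> \<le> \<delta> / (q * q)"
      using p1 p2 q \<delta> by (intro divide_left_mono mult_mono) auto
    also have "\<dots> = \<epsilon>/2" unfolding \<delta>_def using q by simp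
    finally have d1: "1 / (x powr s + k) - 1 / (x powr s + (k + \<delta>)) \<le> \<epsilon>/2" .
    have d0: "0 \<le> 1 / (x powr s + k) - 1 / (x powr s + (k + \<delta>))"
      using p1 p2 q \<delta> by (simp add: frac_le)
    have i: "\<bar>1 / (x powr s + (k + \<delta>)) - (\<Sum>j<m. c j * gdict \<eta> (b j) x)\<bar> \<le> \<epsilon>/2"
      using mcb(3) x by blast
    show ?thesis using d0 d1 i unfolding abs_le_iff by linarith
  qed
  then show ?thesis using mcb(1,2) by blast
qed

theorem corollary4p2:
  fixes \<eta> s k :: real
  assumes "0 < \<eta>" "\<eta> < 1" "0 < s" "s < 1" "0 \<le> k"
  shows "(\<lambda>x. 1 / (x powr s + k)) \<in> L1space \<eta>"
proof -
  define M where "M = (1 / (pi * sin (s*pi))) * (1 / ((1-s)*\<eta>) + 2/s)"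
  have m1: "0 < pi * sin (s*pi)" using assms sin_spi_pos[of s] by simp
  have m2: "0 < 1 / ((1-s)*\<eta>) + 2/s" using assms by (simp add: add_pos_pos)
  have M: "0 < M" unfolding M_def using m1 m2 by simp
  define f where "f = (\<lambda>x::real. 1 / (x powr s + k))"
  define h where "h = (\<lambda>x. f x / M)"
  have hB: "h \<in> B1 \<eta>"
    unfolding B1_def
  proof (safe)
    fix \<epsilon> :: real assume \<epsilon>: "0 < \<epsilon>"
    have \<epsilon>M: "0 < \<epsilon> * M" using \<epsilon> M by simp
    obtain m :: nat and c b :: "nat \<Rightarrow> real" where mcb: "\<forall>j<m. 0 < b j" "(\<Sum>j<m. \<bar>c j\<bar>) \<le> M"
      "\<forall>x\<in>{\<eta>..1}. \<bar>1 / (x powr s + k) - (\<Sum>j<m. c j * gdict \<eta> (b j) x)\<bar> \<le> \<epsilon> * M"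
      using approx_all[OF assms \<epsilon>M, folded M_def] by blast
    show "\<exists>m::nat. \<exists>c b :: nat \<Rightarrow> real. (\<forall>j<m. 0 < b j) \<and> (\<Sum>j<m. \<bar>c j\<bar>) \<le> 1 \<and>
          (\<forall>x\<in>Ival \<eta>. \<bar>h x - (\<Sum>j<m. c j * gdict \<eta> (b j) x)\<bar> \<le> \<epsilon>)"
    proof (intro exI conjI)
      show "\<forall>j<m. 0 < b j" by (rule mcb(1))
      show "(\<Sum>j<m. \<bar>c j / M\<bar>) \<le> 1"
        using mcb(2) M by (simp add: abs_divide sum_divide_distrib[symmetric])
      show "\<forall>x\<in>Ival \<eta>. \<bar>h x - (\<Sum>j<m. c j / M * gdict \<eta> (b j) x)\<bar> \<le> \<epsilon>"
      proof
        fix x assume x: "x \<in> Ival \<eta>"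
        have "h x - (\<Sum>j<m. c j / M * gdict \<eta> (b j) x) = (f x - (\<Sum>j<m. c j * gdict \<eta> (b j) x)) / M"
          unfolding h_def by (simp add: diff_divide_distrib sum_divide_distrib)
        then have "\<bar>h x - (\<Sum>j<m. c j / M * gdict \<eta> (b j) x)\<bar> = \<bar>f x - (\<Sum>j<m. c j * gdict \<eta> (b j) x)\<bar> / M"
          using M by (simp add: abs_divide)
        also have "\<dots> \<le> \<epsilon> * M / M" using mcb(3) x M by (intro divide_right_mono) (auto simp: Ival_def f_def)
        also have "\<dots> = \<epsilon>" using M by simp
        finally show "\<bar>h x - (\<Sum>j<m. c j / M * gdict \<eta> (b j) x)\<bar> \<le> \<epsilon>" .
      qed
    qed
  qed
  have "in_scaled_B1 \<eta> M f"
    unfolding in_scaled_B1_def using hB M by (intro bexI[of _ h]) (auto simp: h_def)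
  then have "ereal M \<in> {ereal c | c. c > 0 \<and> in_scaled_B1 \<eta> c f}" using M by blast
  then have "L1norm \<eta> f \<le> ereal M" unfolding L1norm_def by (rule Inf_lower)
  moreover have "ereal M < \<infinity>" by simp
  ultimately have "L1norm \<eta> f < \<infinity>" by (rule le_less_trans)
  then show ?thesis unfolding L1space_def f_def by simp
qed

end
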